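(* Let $F:\mathbb R^n\rightrightarrows\mathbb R^n$ be a multifunction with nonempty, convex, compact values which is Lipschitz continuous. Let $H(x,p)=\sup_{v\in F(x)}\langle p,v\rangle$ and assume: (H1) there is $c_0\ge 0$ such that for every $p$ the map $x\mapsto H(x,p)$ is semiconvex with constant $c_0\|p\|$; (H2) for every $p\neq 0$, $\nabla_pH(x,p)$ exists for all $x$ and there is $K_1\ge 0$ with $\|\nabla_pH(x,p)-\nabla_pH(y,p)\|\le K_1\|x-y\|$ for all $x,y$, $p\ne0$. Let $\mathcal S\subseteq\mathbb R^n$ be closed with minimum time function $T$. Let $x\in\mathbb R^n\setminus\mathcal S$ with $T(x)<\infty$, let $x(\cdot)$ be an optimal trajectory starting at $x$ and reaching $\mathcal S$ at time $T(x)$, set $\bar x=x(T(x))$, and let $\xi$ be a unit vector in $N^P_{\overline{\mathbb R^n\setminus\mathcal S}}(\bar x)$. Let $p:[0,T(x)]\to\mathbb R^n$ be an absolutely continuous arc with $p(t)\ne0$ for all $t$ such that $$\dot x(t)=F_{p(t)}(x(t)),\qquad -\dot p(t)\in\partial_xH(x(t),p(t))\qquad\text{for a.e. } t\in[0,T(x)].$$ Then: (i) if $H(\bar x,\xi)\ne0$ and $p(T(x))=\xi/H(\bar x,\xi)$, then $H(x(t),p(t))=1$ for all $t\in[0,T(x)]$; (ii) if $H(\bar x,\xi)=0$ and $p(T(x))=\xi$, then $H(x(t),p(t))=0$ for all $t\in[0,T(x)]$.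
   Context: Trajectories are absolutely continuous solutions of $\dot y(t)\in F(y(t))$ a.e. The minimum time function is $T(x)=\inf\{\tau>0:\ \exists$ a trajectory $y$ with $y(0)=x$, $y(\tau)\in\mathcal S\}$ ($\inf\emptyset=+\infty$); an optimal trajectory from $x$ is a trajectory with $x(0)=x$ and $x(T(x))\in\mathcal S$. For $p\ne0$, $F_p(x):=\nabla_pH(x,p)$. $\partial_xH$ is Clarke's generalized gradient in $x$. $N^P_Q(z)$ is the proximal normal cone: $v\in N^P_Q(z)$ iff $\exists\sigma\ge0$ with $\langle v,y-z\rangle\le\sigma\|y-z\|^2$ for all $y\in Q$. A function $h$ is semiconvex with constant $c$ if $-h$ is continuous and $\frac{-h(x_1)-h(x_2)}2+h(\frac{x_1+x_2}2)\le\frac c4\|x_1-x_2\|^2$. *)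

theory Defs
  imports "HOL-Analysis.Analysis" "HOL-Library.Liminf_Limsup"
begin

definition abs_cont_on :: "real \<Rightarrow> real \<Rightarrow> (real \<Rightarrow> 'a::real_normed_vector) \<Rightarrow> bool" where
  "abs_cont_on a b f \<longleftrightarrow>
     (\<forall>\<epsilon>>0. \<exists>\<delta>>0. \<forall>(n::nat) (u::nat \<Rightarrow> real) v.
        (\<forall>i<n. a \<le> u i \<and> u i \<le> v i \<and> v i \<le> b) \<and>
        (\<forall>i<n. \<forall>j<n. i \<noteq> j \<longrightarrow> v i \<le> u j \<or> v j \<le> u i) \<and>
        (\<Sum>i<n. v i - u i) < \<delta>
        \<longrightarrow> (\<Sum>i<n. norm (f (v i) - f (u i))) < \<epsilon>)"

text \<open>Lipschitz continuity of a multifunction (w.r.t. the Hausdorff distance).\<close>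
definition lipschitz_multifun :: "('a::euclidean_space \<Rightarrow> 'a set) \<Rightarrow> bool" where
  "lipschitz_multifun F \<longleftrightarrow>
     (\<exists>L\<ge>0. \<forall>x y. \<forall>v\<in>F x. \<exists>w\<in>F y. dist v w \<le> L * dist x y)"

definition trajectory :: "('a::euclidean_space \<Rightarrow> 'a set) \<Rightarrow> real \<Rightarrow> (real \<Rightarrow> 'a) \<Rightarrow> bool" where
  "trajectory F \<tau> y \<longleftrightarrow> abs_cont_on 0 \<tau> y \<and>
     (\<exists>N. N \<in> null_sets lebesgue \<and>
        (\<forall>t\<in>{0..\<tau>} - N. \<exists>d. (y has_vector_derivative d) (at t within {0..\<tau>}) \<and> d \<in> F (y t)))"

text \<open>Minimum time function (value +\<infinity> if the target is not reachable).\<close>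
definition min_time :: "('a::euclidean_space \<Rightarrow> 'a set) \<Rightarrow> 'a set \<Rightarrow> 'a \<Rightarrow> ereal" where
  "min_time F S x = Inf (ereal ` {\<tau>. \<tau> > 0 \<and> (\<exists>y. trajectory F \<tau> y \<and> y 0 = x \<and> y \<tau> \<in> S)})"

definition hamiltonian :: "('a::euclidean_space \<Rightarrow> 'a set) \<Rightarrow> 'a \<Rightarrow> 'a \<Rightarrow> real" where
  "hamiltonian F x p = (SUP v\<in>F x. p \<bullet> v)"

definition grad_p_H :: "('a::euclidean_space \<Rightarrow> 'a set) \<Rightarrow> 'a \<Rightarrow> 'a \<Rightarrow> 'a" where
  "grad_p_H F x p =
     (SOME g. ((\<lambda>q. hamiltonian F x q) has_derivative (\<lambda>h. g \<bullet> h)) (at p))"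

definition semiconvex_with :: "real \<Rightarrow> ('a::euclidean_space \<Rightarrow> real) \<Rightarrow> bool" where
  "semiconvex_with c h \<longleftrightarrow> continuous_on UNIV (\<lambda>x. - h x) \<and>
     (\<forall>x1 x2. (- h x1 - h x2) / 2 + h ((x1 + x2) /\<^sub>R 2) \<le> c / 4 * (norm (x1 - x2))\<^sup>2)"

definition clarke_dd :: "('a::euclidean_space \<Rightarrow> real) \<Rightarrow> 'a \<Rightarrow> 'a \<Rightarrow> ereal" where
  "clarke_dd f x v =
     Limsup (nhds x \<times>\<^sub>F at_right 0) (\<lambda>(y, t). ereal ((f (y + t *\<^sub>R v) - f y) / t))"

definition clarke_grad :: "('a::euclidean_space \<Rightarrow> real) \<Rightarrow> 'a \<Rightarrow> 'a set" where
  "clarke_grad f x = {\<zeta>. \<forall>v. ereal (\<zeta> \<bullet> v) \<le> clarke_dd f x v}"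

definition proximal_normal :: "'a::euclidean_space set \<Rightarrow> 'a \<Rightarrow> 'a set" where
  "proximal_normal Q z = {v. \<exists>\<sigma>\<ge>0. \<forall>y\<in>Q. v \<bullet> (y - z) \<le> \<sigma> * (norm (y - z))\<^sup>2}"

end

theory Submission
  imports Defs
begin

lemma ac_cont:
  assumes "abs_cont_on a b f"
  shows "continuous_on {a..b} f"
  unfolding continuous_on_iff
proof (intro ballI allI impI)
  fix x e :: real assume x: "x \<in> {a..b}" and e: "e > 0"
  obtain d where d: "d > 0" and H: "\<forall>(n::nat) (u::nat \<Rightarrow> real) v.
        (\<forall>i<n. a \<le> u i \<and> u i \<le> v i \<and> v i \<le> b) \<and>
        (\<forall>i<n. \<forall>j<n. i \<noteq> j \<longrightarrow> v i \<le> u j \<or> v j \<le> u i) \<and>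
        (\<Sum>i<n. v i - u i) < d
        \<longrightarrow> (\<Sum>i<n. norm (f (v i) - f (u i))) < e"
    using assms e unfolding abs_cont_on_def by blast
  show "\<exists>d>0. \<forall>x'\<in>{a..b}. dist x' x < d \<longrightarrow> dist (f x') (f x) < e"
  proof (intro exI[of _ d] conjI ballI impI)
    show "0 < d" by (rule d)
  next
    fix x' assume x': "x' \<in> {a..b}" and dx: "dist x' x < d"
    have md: "max x x' - min x x' < d" using dx by (auto simp: dist_real_def max_def min_def)
    have "(\<Sum>i<Suc 0. norm (f ((\<lambda>_. max x x') i) - f ((\<lambda>_. min x x') i))) < e"
      using H[rule_format, of "Suc 0" "\<lambda>_. min x x'" "\<lambda>_. max x x'"] x x' md
      by auto
    then show "dist (f x') (f x) < e"
      by (cases "x \<le> x'") (auto simp: dist_norm norm_minus_commute max_def min_def)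
  qed
qed

lemma ac_sub:
  assumes "abs_cont_on a b f" "a \<le> c" "d \<le> b"
  shows "abs_cont_on c d f"
  using assms unfolding abs_cont_on_def
  by (smt (verit, ccfv_threshold))

lemma ac_mono_right:
  fixes g :: "real \<Rightarrow> real"
  assumes ac: "abs_cont_on a b g" and ab: "a \<le> b" and N: "N \<in> null_sets lebesgue"
    and R: "\<And>t e. t \<in> {a..<b} - N \<Longrightarrow> e > 0 \<Longrightarrow>
              \<exists>d>0. \<forall>s. t < s \<and> s < t + d \<and> s \<le> b \<longrightarrow> g t - e*(s-t) \<le> g s"
  shows "g a \<le> g b"
proof -
  have cont: "continuous_on {a..b} g" using ac by (rule ac_cont)
  have main: "g a \<le> g b + e*(b-a) + e" if e: "e > 0" for e
  proof -
    obtain \<delta> where \<delta>: "\<delta> > 0" and acd: "\<forall>(n::nat) (u::nat \<Rightarrow> real) v.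
        (\<forall>i<n. a \<le> u i \<and> u i \<le> v i \<and> v i \<le> b) \<and>
        (\<forall>i<n. \<forall>j<n. i \<noteq> j \<longrightarrow> v i \<le> u j \<or> v j \<le> u i) \<and>
        (\<Sum>i<n. v i - u i) < \<delta>
        \<longrightarrow> (\<Sum>i<n. norm (g (v i) - g (u i))) < e"
      using ac e unfolding abs_cont_on_def by blast
    have Nl: "N \<in> sets lebesgue" using N by auto
    obtain U where U: "open U" "N \<subseteq> U" "(U - N) \<in> lmeasurable" "emeasure lebesgue (U - N) < ennreal \<delta>"
      using sets_lebesgue_outer_open[OF Nl \<delta>] by blast
    have Ul: "U \<in> sets lebesgue" using U(1) by (simp add: borel_open)
    have "emeasure lebesgue U \<le> emeasure lebesgue (U - N) + emeasure lebesgue N"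
    proof -
      have "U = (U - N) \<union> N" using U(2) by blast
      then have "emeasure lebesgue U = emeasure lebesgue ((U - N) \<union> N)" by simp
      also have "\<dots> \<le> emeasure lebesgue (U - N) + emeasure lebesgue N"
        by (rule emeasure_subadditive) (use U(3) Nl in auto)
      finally show ?thesis .
    qed
    then have Umeas: "emeasure lebesgue U < ennreal \<delta>" using U(4) N by auto
    define adm where "adm s n u v \<longleftrightarrow> (\<forall>i<n. a \<le> u i \<and> u i \<le> v i \<and> v i \<le> s \<and> {u i..v i} \<subseteq> U) \<and>
         (\<forall>i<n. \<forall>j<n. i \<noteq> j \<longrightarrow> v i \<le> u j \<or> v j \<le> u i)" for s :: real and n :: nat and u v :: "nat \<Rightarrow> real"
    define Sm where "Sm s = {\<Sum>i<n. \<bar>g (v i) - g (u i)\<bar> | n u v. adm s n u v}" for s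
    define V where "V s = Sup (Sm s)" for s
    have len: "(\<Sum>i<n. v i - u i) < \<delta>" if "adm s n u v" for s n u v
    proof -
      have le: "\<forall>i<n. u i \<le> v i" using that unfolding adm_def by auto
      have disj: "disjoint_family_on (\<lambda>i. {u i..<v i}) {..<n}"
        unfolding disjoint_family_on_def
      proof (intro ballI impI)
        fix i j assume ij: "i \<in> {..<n}" "j \<in> {..<n}" "i \<noteq> j"
        then have "v i \<le> u j \<or> v j \<le> u i" using that unfolding adm_def by auto
        then show "{u i..<v i} \<inter> {u j..<v j} = {}" by auto
      qed
      have "ennreal (\<Sum>i<n. v i - u i) = (\<Sum>i<n. ennreal (v i - u i))"
        using le by (intro sum_ennreal[symmetric]) auto
      also have "\<dots> = (\<Sum>i<n. emeasure lebesgue {u i..<v i})"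
        using le by (intro sum.cong) auto
      also have "\<dots> = emeasure lebesgue (\<Union>i<n. {u i..<v i})"
        by (rule sum_emeasure) (use disj in auto)
      also have "\<dots> \<le> emeasure lebesgue U"
        using that unfolding adm_def by (intro emeasure_mono) (auto simp: Ul, meson atLeastAtMost_iff less_imp_le subsetD)
      finally have "ennreal (\<Sum>i<n. v i - u i) < ennreal \<delta>" using Umeas by simp
      moreover have "0 \<le> (\<Sum>i<n. v i - u i)" using le by (auto intro: sum_nonneg)
      ultimately show ?thesis using ennreal_less_iff by blast
    qed
    have Sm_bd: "\<sigma> < e" if sb: "s \<le> b" and sm: "\<sigma> \<in> Sm s" for s \<sigma>
    proof -
      obtain n u v where adm: "adm s n u v" and sig: "\<sigma> = (\<Sum>i<n. \<bar>g (v i) - g (u i)\<bar>)"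
        using sm unfolding Sm_def by blast
      have c1: "\<forall>i<n. a \<le> u i \<and> u i \<le> v i \<and> v i \<le> b" using adm sb unfolding adm_def by force
      have c2: "\<forall>i<n. \<forall>j<n. i \<noteq> j \<longrightarrow> v i \<le> u j \<or> v j \<le> u i" using adm unfolding adm_def by blast
      show ?thesis using acd[rule_format, OF conjI[OF c1 conjI[OF c2 len[OF adm]]]] sig by simp
    qed
    have Sm0: "0 \<in> Sm s" for s
      unfolding Sm_def adm_def by (rule CollectI, rule exI[of _ 0]) auto
    have bdd: "bdd_above (Sm s)" if "s \<le> b" for s
      using Sm_bd[OF that] unfolding bdd_above_def by (meson less_le)
    have V_le: "V s \<le> e" if "s \<le> b" for s
      unfolding V_def using Sm0 Sm_bd[OF that] by (intro cSup_least) (auto intro: less_imp_le)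
    have V_ge0: "0 \<le> V s" if "s \<le> b" for s
      unfolding V_def using Sm0 bdd[OF that] by (intro cSup_upper2) auto
    have V_mono: "V s \<le> V s'" if "s \<le> s'" "s' \<le> b" for s s'
    proof -
      have "adm s' n u v" if "adm s n u v" for n u v
        using that \<open>s \<le> s'\<close> unfolding adm_def by (auto intro: order_trans)
      then have "Sm s \<subseteq> Sm s'" unfolding Sm_def by blast
      then show ?thesis unfolding V_def using Sm0 bdd[OF that(2)] by (intro cSup_subset_mono) auto
    qed
    have V_add: "V m + \<bar>g s - g m\<bar> \<le> V s" if "a \<le> m" "m \<le> s" "s \<le> b" "{m..s} \<subseteq> U" for m s
    proof -
      have "\<sigma> \<le> V s - \<bar>g s - g m\<bar>" if sm: "\<sigma> \<in> Sm m" for \<sigma>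
      proof -
        obtain n u v where adm: "adm m n u v" and \<sigma>: "\<sigma> = (\<Sum>i<n. \<bar>g (v i) - g (u i)\<bar>)"
          using sm unfolding Sm_def by blast
        define u' where "u' = u(n := m)"
        define v' where "v' = v(n := s)"
        have A1: "\<forall>i<n. a \<le> u i \<and> u i \<le> v i \<and> v i \<le> m \<and> {u i..v i} \<subseteq> U"
          and A2: "\<forall>i<n. \<forall>j<n. i \<noteq> j \<longrightarrow> v i \<le> u j \<or> v j \<le> u i"
          using adm unfolding adm_def by auto
        have B1: "\<forall>i<Suc n. a \<le> u' i \<and> u' i \<le> v' i \<and> v' i \<le> s \<and> {u' i..v' i} \<subseteq> U"
        proof (intro allI impI)
          fix i assume "i < Suc n"
          then consider "i < n" | "i = n" by linarith
          then show "a \<le> u' i \<and> u' i \<le> v' i \<and> v' i \<le> s \<and> {u' i..v' i} \<subseteq> U"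
          proof cases
            case 1 then show ?thesis using A1 \<open>m \<le> s\<close> unfolding u'_def v'_def by auto
          next
            case 2 then show ?thesis using \<open>a \<le> m\<close> \<open>m \<le> s\<close> \<open>{m..s} \<subseteq> U\<close> unfolding u'_def v'_def by auto
          qed
        qed
        have B2: "\<forall>i<Suc n. \<forall>j<Suc n. i \<noteq> j \<longrightarrow> v' i \<le> u' j \<or> v' j \<le> u' i"
        proof (intro allI impI)
          fix i j assume ij: "i < Suc n" "j < Suc n" "i \<noteq> j"
          show "v' i \<le> u' j \<or> v' j \<le> u' i"
          proof (cases "i = n")
            case True then have "j < n" using ij by auto
            then show ?thesis using True A1 unfolding u'_def v'_def by auto
          next
            case False
            then have i: "i < n" using ij by auto
            show ?thesis
            proof (cases "j = n")
              case True then show ?thesis using i A1 unfolding u'_def v'_def by auto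
            next
              case False then have "j < n" using ij by auto
              then show ?thesis using i ij A2 \<open>i \<noteq> n\<close> False unfolding u'_def v'_def by auto
            qed
          qed
        qed
        have adm': "adm s (Suc n) u' v'" unfolding adm_def using B1 B2 by blast
        have "(\<Sum>i<Suc n. \<bar>g (v' i) - g (u' i)\<bar>) = \<sigma> + \<bar>g s - g m\<bar>"
          unfolding \<sigma> u'_def v'_def by simp
        moreover have "(\<Sum>i<Suc n. \<bar>g (v' i) - g (u' i)\<bar>) \<in> Sm s"
          unfolding Sm_def using adm' by blast
        ultimately have "\<sigma> + \<bar>g s - g m\<bar> \<le> V s"
          unfolding V_def using bdd[OF \<open>s \<le> b\<close>] by (metis cSup_upper)
        then show ?thesis by simp
      qed
      then have "V m \<le> V s - \<bar>g s - g m\<bar>"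
        unfolding V_def[of m] using Sm0 by (intro cSup_least) auto
      then show ?thesis by simp
    qed
    define Q where "Q s \<longleftrightarrow> g a - e*(s-a) - V s \<le> g s" for s
    define K where "K = {s\<in>{a..b}. \<forall>r\<in>{a..s}. Q r}"
    have Qa: "Q a" unfolding Q_def using V_ge0[OF ab] by simp
    have aK: "a \<in> K" unfolding K_def using ab Qa by auto
    have Kbdd: "bdd_above K" unfolding K_def bdd_above_def by auto
    define m where "m = Sup K"
    have am: "a \<le> m" unfolding m_def using aK Kbdd by (rule cSup_upper)
    have mb: "m \<le> b" unfolding m_def using aK by (intro cSup_least) (auto simp: K_def)
    have below: "Q r" if ar: "a \<le> r" and rm: "r < m" for r
    proof -
      obtain k where "k \<in> K" "r < k" using less_cSupE[of r K] rm aK unfolding m_def by blast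
      then show ?thesis unfolding K_def using ar by auto
    qed
    have Qm: "Q m"
    proof (cases "m = a")
      case True then show ?thesis using Qa by simp
    next
      case False
      then have am': "a < m" using am by simp
      have lim: "(g \<longlongrightarrow> g m) (at m within {a..<m})"
        using cont am mb unfolding continuous_on_def
        by (meson atLeastAtMost_iff atLeastLessThan_subseteq_atLeastAtMost_iff order_refl tendsto_within_subset)
      have nb: "at m within {a..<m} \<noteq> bot"
        using am' by (simp add: trivial_limit_within)
      have allr: "\<forall>r\<in>{a..<m}. g a - e*(m-a) - V m \<le> g r"
      proof
        fix r assume r: "r \<in> {a..<m}"
        have "e*(r-a) \<le> e*(m-a)" using r e by (intro mult_left_mono) auto
        then have "g a - e*(m-a) - V m \<le> g a - e*(r-a) - V r"
          using r V_mono[of r m] mb by auto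
        also have "\<dots> \<le> g r" using below r unfolding Q_def by auto
        finally show "g a - e*(m-a) - V m \<le> g r" .
      qed
      have ev: "eventually (\<lambda>r. g a - e*(m-a) - V m \<le> g r) (at m within {a..<m})"
        unfolding eventually_at_filter by (rule always_eventually) (use allr in auto)
      have "g a - e*(m-a) - V m \<le> g m"
        by (rule tendsto_lowerbound[OF lim ev nb])
      then show ?thesis unfolding Q_def .
    qed
    have mK: "m \<in> K" unfolding K_def using am mb below Qm by (auto simp: le_less)
    have mb_eq: "m = b"
    proof (rule ccontr)
      assume "m \<noteq> b"
      then have mb': "m < b" using mb by simp
      have step: "\<exists>d>0. \<forall>s. m < s \<and> s < m + d \<and> s \<le> b \<longrightarrow> Q s"
      proof (cases "m \<in> N")
        case False
        then obtain d where d: "d > 0" "\<forall>s. m < s \<and> s < m + d \<and> s \<le> b \<longrightarrow> g m - e*(s-m) \<le> g s"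
          using R[of m e] am mb' e by auto
        show ?thesis
        proof (intro exI[of _ d] conjI allI impI)
          fix s assume s: "m < s \<and> s < m + d \<and> s \<le> b"
          have "g a - e*(s-a) - V s \<le> g a - e*(m-a) - V m - e*(s-m)"
            using V_mono[of m s] s by (auto simp: algebra_simps)
          also have "\<dots> \<le> g m - e*(s-m)" using Qm unfolding Q_def by simp
          also have "\<dots> \<le> g s" using d s by auto
          finally show "Q s" unfolding Q_def .
        qed (rule d)
      next
        case True
        then have "m \<in> U" using U(2) by auto
        then obtain r where r: "r > 0" "ball m r \<subseteq> U" using U(1) open_contains_ball by blast
        show ?thesis
        proof (intro exI[of _ r] conjI allI impI)
          fix s assume s: "m < s \<and> s < m + r \<and> s \<le> b"
          have "{m..s} \<subseteq> ball m r" using s by (auto simp: dist_real_def)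
          then have add: "V m + \<bar>g s - g m\<bar> \<le> V s" using V_add[of m s] am s r(2) by auto
          have "e*(m-a) \<le> e*(s-a)" using s e by (intro mult_left_mono) auto
          then have "g a - e*(s-a) - V s \<le> g a - e*(m-a) - V m - \<bar>g s - g m\<bar>"
            using add by auto
          also have "\<dots> \<le> g m - \<bar>g s - g m\<bar>" using Qm unfolding Q_def by simp
          also have "\<dots> \<le> g s" by simp
          finally show "Q s" unfolding Q_def .
        qed (rule r)
      qed
      then obtain d where d: "d > 0" "\<forall>s. m < s \<and> s < m + d \<and> s \<le> b \<longrightarrow> Q s" by blast
      define s0 where "s0 = min (m + d/2) b"
      have s0: "m < s0" "s0 \<le> b" using d mb' unfolding s0_def by auto
      have "s0 \<in> K"
        unfolding K_def
      proof (intro CollectI conjI ballI)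
        show "s0 \<in> {a..b}" using s0 am by auto
        fix r assume r: "r \<in> {a..s0}"
        show "Q r"
        proof (cases "r \<le> m")
          case True then show ?thesis using mK r unfolding K_def by auto
        next
          case False then show ?thesis using d r s0 unfolding s0_def by auto
        qed
      qed
      then have "s0 \<le> m" unfolding m_def using Kbdd by (rule cSup_upper)
      then show False using s0 by simp
    qed
    have "Q b" using Qm mb_eq by simp
    then show ?thesis using V_le[of b] unfolding Q_def by (auto simp: algebra_simps)
  qed
  show ?thesis
  proof (rule field_le_epsilon)
    fix e :: real assume e: "e > 0"
    have h1: "g a \<le> g b + ((e/(b-a+1))*(b-a) + e/(b-a+1))" using main[of "e/(b-a+1)"] e ab by auto
    have "(e/(b-a+1))*(b-a) + e/(b-a+1) = (e/(b-a+1))*(b-a+1)" by (simp add: distrib_left)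
    also have "\<dots> = e" using ab by simp
    finally show "g a \<le> g b + e" using h1 by simp
  qed
qed

lemma ac_reflect:
  assumes "abs_cont_on a b g"
  shows "abs_cont_on (-b) (-a) (\<lambda>r. g (-r))"
  unfolding abs_cont_on_def
proof (intro allI impI)
  fix \<epsilon> :: real assume e: "\<epsilon> > 0"
  obtain d where d: "d > 0" and H: "\<forall>(n::nat) (u::nat \<Rightarrow> real) v.
        (\<forall>i<n. a \<le> u i \<and> u i \<le> v i \<and> v i \<le> b) \<and>
        (\<forall>i<n. \<forall>j<n. i \<noteq> j \<longrightarrow> v i \<le> u j \<or> v j \<le> u i) \<and>
        (\<Sum>i<n. v i - u i) < d
        \<longrightarrow> (\<Sum>i<n. norm (g (v i) - g (u i))) < \<epsilon>"
    using assms e unfolding abs_cont_on_def by blast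
  show "\<exists>\<delta>>0. \<forall>(n::nat) (u::nat \<Rightarrow> real) v.
        (\<forall>i<n. - b \<le> u i \<and> u i \<le> v i \<and> v i \<le> - a) \<and>
        (\<forall>i<n. \<forall>j<n. i \<noteq> j \<longrightarrow> v i \<le> u j \<or> v j \<le> u i) \<and>
        (\<Sum>i<n. v i - u i) < \<delta>
        \<longrightarrow> (\<Sum>i<n. norm (g (- v i) - g (- u i))) < \<epsilon>"
  proof (intro exI[of _ d] conjI allI impI)
    show "0 < d" by (rule d)
  next
    fix n :: nat and u v :: "nat \<Rightarrow> real"
    assume A: "(\<forall>i<n. - b \<le> u i \<and> u i \<le> v i \<and> v i \<le> - a) \<and>
        (\<forall>i<n. \<forall>j<n. i \<noteq> j \<longrightarrow> v i \<le> u j \<or> v j \<le> u i) \<and>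
        (\<Sum>i<n. v i - u i) < d"
    have c1: "\<forall>i<n. a \<le> - v i \<and> - v i \<le> - u i \<and> - u i \<le> b" using A by force
    have c2: "\<forall>i<n. \<forall>j<n. i \<noteq> j \<longrightarrow> - u i \<le> - v j \<or> - u j \<le> - v i" using A by force
    have c3: "(\<Sum>i<n. - u i - - v i) < d" using A by (simp add: algebra_simps)
    have "(\<Sum>i<n. norm (g (- u i) - g (- v i))) < \<epsilon>"
      using H[rule_format, of n "\<lambda>i. - v i" "\<lambda>i. - u i"] c1 c2 c3 by blast
    then show "(\<Sum>i<n. norm (g (- v i) - g (- u i))) < \<epsilon>"
      by (simp add: norm_minus_commute)
  qed
qed

lemma null_reflect:
  assumes "N \<in> null_sets lebesgue"
  shows "uminus ` N \<in> null_sets (lebesgue :: real measure)"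
proof -
  have "negligible N" using assms by (simp add: negligible_iff_null_sets)
  then have "negligible ((uminus :: real \<Rightarrow> real) ` N)"
    by (intro negligible_differentiable_image_negligible) (auto intro!: derivative_intros simp: differentiable_on_def)
  then show ?thesis by (simp add: negligible_iff_null_sets)
qed

lemma ac_mono_left:
  fixes g :: "real \<Rightarrow> real"
  assumes ac: "abs_cont_on a b g" and ab: "a \<le> b" and N: "N \<in> null_sets lebesgue"
    and L: "\<And>t e. t \<in> {a<..b} - N \<Longrightarrow> e > 0 \<Longrightarrow>
              \<exists>d>0. \<forall>s. t - d < s \<and> s < t \<and> a \<le> s \<longrightarrow> g t - e*(t-s) \<le> g s"
  shows "g b \<le> g a"
proof -
  have "(\<lambda>r. g (-r)) (-b) \<le> (\<lambda>r. g (-r)) (-a)"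
  proof (rule ac_mono_right[OF ac_reflect[OF ac] _ null_reflect[OF N]])
    show "- b \<le> - a" using ab by simp
    fix t e :: real assume t: "t \<in> {- b..<- a} - uminus ` N" and e: "e > 0"
    have t': "-t \<in> {a<..b} - N" using t by (auto simp: image_iff)
    obtain d where d: "d > 0" "\<forall>s. -t - d < s \<and> s < -t \<and> a \<le> s \<longrightarrow> g (-t) - e*(-t-s) \<le> g s"
      using L[OF t' e] by blast
    show "\<exists>d>0. \<forall>s. t < s \<and> s < t + d \<and> s \<le> - a \<longrightarrow> g (- t) - e * (s - t) \<le> g (- s)"
    proof (intro exI[of _ d] conjI allI impI)
      fix s assume s: "t < s \<and> s < t + d \<and> s \<le> - a"
      have "g (-t) - e*(-t-(-s)) \<le> g (-s)" using d(2)[rule_format, of "-s"] s by auto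
      then show "g (- t) - e * (s - t) \<le> g (- s)" by (simp add: algebra_simps)
    qed (rule d(1))
  qed
  then show ?thesis by simp
qed

locale HF =
  fixes F :: "'a::euclidean_space \<Rightarrow> 'a set" and L :: real
  assumes F_ne: "\<And>y. F y \<noteq> {}"
    and F_compact: "\<And>y. compact (F y)"
    and L0: "L \<ge> 0"
    and Lip: "\<And>x y v. v \<in> F x \<Longrightarrow> \<exists>w\<in>F y. dist v w \<le> L * dist x y"
begin

abbreviation "H \<equiv> hamiltonian F"

lemma bdd: "bdd_above ((\<lambda>v. q \<bullet> v) ` F y)"
proof -
  obtain B where B: "\<forall>v\<in>F y. norm v \<le> B" using compact_imp_bounded[OF F_compact] bounded_iff by blast
  have "q \<bullet> v \<le> norm q * B" if "v \<in> F y" for v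
    using B that norm_cauchy_schwarz[of q v] by (meson mult_left_mono norm_ge_zero order_trans)
  then show ?thesis unfolding bdd_above_def by blast
qed

lemma H_ge: "v \<in> F y \<Longrightarrow> q \<bullet> v \<le> H y q"
  unfolding hamiltonian_def by (rule cSUP_upper[OF _ bdd])

lemma H_le: "(\<And>v. v \<in> F y \<Longrightarrow> q \<bullet> v \<le> c) \<Longrightarrow> H y q \<le> c"
  unfolding hamiltonian_def by (rule cSUP_least[OF F_ne])

lemma H_lip_x: "H y q \<le> H z q + L * norm q * norm (y - z)"
proof (rule H_le)
  fix v assume v: "v \<in> F y"
  obtain w where w: "w \<in> F z" "dist v w \<le> L * dist y z" using Lip[OF v] by blast
  have "q \<bullet> v = q \<bullet> w + q \<bullet> (v - w)" by (simp add: inner_diff_right)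
  also have "\<dots> \<le> H z q + norm q * norm (v - w)"
    using H_ge[OF w(1), of q] norm_cauchy_schwarz[of q "v - w"] by linarith
  also have "norm q * norm (v - w) \<le> norm q * (L * norm (y - z))"
    using w(2) by (intro mult_left_mono) (auto simp: dist_norm)
  finally show "q \<bullet> v \<le> H z q + L * norm q * norm (y - z)" by (simp add: mult.assoc mult.left_commute)
qed

lemma H_lip_x_abs: "\<bar>H y q - H z q\<bar> \<le> L * norm q * norm (y - z)"
  using H_lip_x[of y q z] H_lip_x[of z q y] by (simp add: norm_minus_commute abs_le_iff)

definition B0 where "B0 = (SOME B. \<forall>v\<in>F 0. norm v \<le> B)"

lemma B0: "v \<in> F 0 \<Longrightarrow> norm v \<le> B0"
proof -
  have "\<exists>B. \<forall>v\<in>F 0. norm v \<le> B" using compact_imp_bounded[OF F_compact] bounded_iff by blast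
  from someI_ex[OF this] show "v \<in> F 0 \<Longrightarrow> norm v \<le> B0" unfolding B0_def by blast
qed

lemma F_bound: "v \<in> F y \<Longrightarrow> norm v \<le> B0 + L * norm y"
proof -
  assume v: "v \<in> F y"
  obtain w where w: "w \<in> F 0" "dist v w \<le> L * dist y 0" using Lip[OF v] by blast
  have "norm v \<le> norm w + norm (v - w)" by (metis add.commute diff_add_cancel norm_triangle_ineq)
  also have "\<dots> \<le> B0 + L * norm y" using B0[OF w(1)] w(2) by (simp add: dist_norm)
  finally show ?thesis .
qed

lemma H_lip_p: "H y q \<le> H y q' + (B0 + L * norm y) * norm (q - q')"
proof (rule H_le)
  fix v assume v: "v \<in> F y"
  have "q \<bullet> v = q' \<bullet> v + (q - q') \<bullet> v" by (simp add: inner_diff_left)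
  also have "\<dots> \<le> H y q' + norm (q - q') * norm v"
    using H_ge[OF v, of q'] norm_cauchy_schwarz[of "q - q'" v] by linarith
  also have "norm (q - q') * norm v \<le> norm (q - q') * (B0 + L * norm y)"
    using F_bound[OF v] by (intro mult_left_mono) auto
  finally show "q \<bullet> v \<le> H y q' + (B0 + L * norm y) * norm (q - q')" by (simp add: mult.commute)
qed

lemma H_lip_p_abs: "\<bar>H y q - H y q'\<bar> \<le> (B0 + L * norm y) * norm (q - q')"
  using H_lip_p[of y q q'] H_lip_p[of y q' q] by (simp add: norm_minus_commute abs_le_iff)

lemma H_hom: assumes c: "c > 0" shows "H y (c *\<^sub>R q) = c * H y q"
proof (rule antisym)
  show "H y (c *\<^sub>R q) \<le> c * H y q"
    by (rule H_le) (use H_ge c in \<open>auto intro: mult_left_mono\<close>)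
  have "H y q \<le> H y (c *\<^sub>R q) / c"
  proof (rule H_le)
    fix v assume "v \<in> F y"
    then have "(c *\<^sub>R q) \<bullet> v \<le> H y (c *\<^sub>R q)" by (rule H_ge)
    then show "q \<bullet> v \<le> H y (c *\<^sub>R q) / c" using c by (simp add: field_simps)
  qed
  then show "c * H y q \<le> H y (c *\<^sub>R q)" using c by (simp add: field_simps)
qed

end

lemma midconv_line:
  fixes \<phi> :: "real \<Rightarrow> real"
  assumes cont: "continuous_on {0..1} \<phi>"
    and mid: "\<And>s t. s \<in> {0..1} \<Longrightarrow> t \<in> {0..1} \<Longrightarrow> \<phi> ((s+t)/2) \<le> (\<phi> s + \<phi> t)/2"
    and t: "t \<in> {0..1}"
  shows "\<phi> t \<le> (1-t) * \<phi> 0 + t * \<phi> 1"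
proof (rule ccontr)
  assume neg: "\<not> ?thesis"
  define \<psi> where "\<psi> s = \<phi> s - ((1-s) * \<phi> 0 + s * \<phi> 1)" for s
  have cpsi: "continuous_on {0..1} \<psi>" unfolding \<psi>_def by (intro continuous_intros cont)
  have mpsi: "\<psi> ((s+u)/2) \<le> (\<psi> s + \<psi> u)/2" if "s \<in> {0..1}" "u \<in> {0..1}" for s u
    using mid[OF that] unfolding \<psi>_def by (simp add: field_simps)
  obtain tm where tm: "tm \<in> {0..1}" "\<forall>y\<in>{0..1}. \<psi> y \<le> \<psi> tm"
    using continuous_attains_sup[OF compact_Icc _ cpsi] by auto
  define M where "M = \<psi> tm"
  have Mpos: "M > 0" using tm(2) t neg unfolding M_def \<psi>_def by force
  define A where "A = {s \<in> {0..1}. \<psi> s = M}"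
  have "closed A" unfolding A_def by (rule continuous_closed_preimage_constant[OF cpsi closed_atLeastAtMost])
  then have "compact ({0..1} \<inter> A)" by (rule compact_Int_closed[OF compact_Icc])
  moreover have "{0..1} \<inter> A = A" by (auto simp: A_def)
  ultimately have "compact A" by simp
  moreover have "A \<noteq> {}" using tm unfolding A_def M_def by auto
  ultimately obtain t0 where t0: "t0 \<in> A" "\<forall>y\<in>A. t0 \<le> y"
    using compact_attains_inf[of A] by blast
  have t0i: "t0 \<in> {0..1}" "\<psi> t0 = M" using t0 unfolding A_def by auto
  have "\<psi> 0 = 0" "\<psi> 1 = 0" unfolding \<psi>_def by simp_all
  then have t0o: "0 < t0" "t0 < 1" using t0i Mpos by (auto simp: le_less)
  define r where "r = min t0 (1 - t0)"
  have r: "r > 0" "t0 - r \<in> {0..1}" "t0 + r \<in> {0..1}" using t0o unfolding r_def by auto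
  have "\<psi> (t0 - r) \<noteq> M"
  proof
    assume "\<psi> (t0 - r) = M"
    then have "t0 - r \<in> A" using r unfolding A_def by auto
    then show False using t0(2) r by fastforce
  qed
  moreover have "\<psi> (t0 - r) \<le> M" using tm(2) r(2) unfolding M_def by blast
  ultimately have l: "\<psi> (t0 - r) < M" by simp
  have u: "\<psi> (t0 + r) \<le> M" using tm(2) r(3) unfolding M_def by auto
  have "\<psi> (((t0 - r) + (t0 + r))/2) \<le> (\<psi> (t0 - r) + \<psi> (t0 + r))/2" by (rule mpsi[OF r(2) r(3)])
  then have "\<psi> t0 < M" using l u by simp
  then show False using t0i by simp
qed

lemma norm_mid_sq:
  fixes z1 z2 :: "'a::real_inner"
  shows "(norm ((z1 + z2) /\<^sub>R 2))\<^sup>2 = ((norm z1)\<^sup>2 + (norm z2)\<^sup>2)/2 - (norm (z1 - z2))\<^sup>2/4"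
  by (simp add: power2_norm_eq_inner inner_add_left inner_add_right inner_diff_left inner_diff_right
      inner_commute field_simps)

lemma norm_add_sq:
  fixes z v :: "'a::real_inner"
  shows "(norm (z + t *\<^sub>R v))\<^sup>2 = (norm z)\<^sup>2 + 2 * t * (z \<bullet> v) + t\<^sup>2 * (norm v)\<^sup>2"
  unfolding power2_norm_eq_inner by (simp add: inner_add_left inner_add_right inner_commute power2_eq_square algebra_simps)

lemma aux_lin:
  fixes a b m cm ca cb d :: real
  assumes "(-a-b)/2 + m \<le> d" "cm = (ca+cb)/2 - d"
  shows "m + cm \<le> (a + ca + (b + cb))/2"
  using assms by argo

lemma aux3:
  fixes kA kz kv hA hz nA nz nv ip t c :: real
  assumes "kA \<le> (1-t)*kz + t*kv" "hA = kA - c*nA" "hz = kz - c*nz" "nA = nz + 2*t*ip + t\<^sup>2*nv" "0 < t"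
  shows "(hA - hz)/t \<le> kv - kz - c*(2*ip + t*nv)"
proof -
  have "hA - hz = kA - kz - c*(2*t*ip + t\<^sup>2*nv)" using assms(2-4) by (simp add: algebra_simps)
  also have "\<dots> \<le> t*(kv - kz) - c*(2*t*ip + t\<^sup>2*nv)" using assms(1) by (simp add: algebra_simps)
  also have "\<dots> = t * (kv - kz - c*(2*ip + t*nv))" by (simp add: algebra_simps power2_eq_square)
  finally show ?thesis using assms(5) by (simp add: pos_divide_le_eq mult.commute)
qed

lemma aux4:
  fixes zv hy hx ny nx ip nv c :: real
  assumes "zv \<le> hy + c*ny - (hx + c*nx) - c*(2*ip + 0*nv)" "ny - nx - 2*ip = nv"
  shows "hx + zv - c*nv \<le> hy"
proof -
  have "c*nv = c*ny - c*nx - c*(2*ip)" using assms(2) by (auto simp: algebra_simps)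
  then show ?thesis using assms(1) by simp
qed

lemma semiconvex_subgrad:
  fixes h :: "'a::euclidean_space \<Rightarrow> real"
  assumes sc: "semiconvex_with c h" and zeta: "\<zeta> \<in> clarke_grad h x"
  shows "h x + \<zeta> \<bullet> (y - x) - c * (norm (y - x))\<^sup>2 \<le> h y"
proof -
  have "continuous_on UNIV (\<lambda>z. - h z)" using sc unfolding semiconvex_with_def by blast
  then have "continuous_on UNIV (\<lambda>z. - (- h z))" by (rule continuous_on_minus)
  then have hc: "continuous_on UNIV h" by simp
  have hmid: "(- h z1 - h z2) / 2 + h ((z1 + z2) /\<^sub>R 2) \<le> c / 4 * (norm (z1 - z2))\<^sup>2" for z1 z2
    using sc unfolding semiconvex_with_def by blast
  define k where "k z = h z + c * (norm z)\<^sup>2" for z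
  have kc: "continuous_on UNIV k" unfolding k_def by (intro continuous_intros hc)
  have kmid: "k ((z1 + z2) /\<^sub>R 2) \<le> (k z1 + k z2)/2" for z1 z2
  proof -
    have e1: "c * (norm ((z1 + z2) /\<^sub>R 2))\<^sup>2 = c * (((norm z1)\<^sup>2 + (norm z2)\<^sup>2)/2 - (norm (z1 - z2))\<^sup>2/4)"
      by (simp only: norm_mid_sq)
    have e2: "c * (norm ((z1 + z2) /\<^sub>R 2))\<^sup>2 = (c * (norm z1)\<^sup>2 + c * (norm z2)\<^sup>2)/2 - c/4 * (norm (z1 - z2))\<^sup>2"
      using e1 by (simp add: algebra_simps)
    show ?thesis unfolding k_def by (rule aux_lin[OF hmid[of z1 z2] e2])
  qed
  have kconv: "k (z + t *\<^sub>R v) \<le> (1-t) * k z + t * k (z + v)" if t: "t \<in> {0..1}" for z v t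
  proof -
    define \<phi> where "\<phi> s = k (z + s *\<^sub>R v)" for s
    have "continuous_on {0..1} \<phi>" unfolding \<phi>_def
      by (intro continuous_on_compose2[OF kc]) (auto intro!: continuous_intros)
    moreover have "\<phi> ((s+u)/2) \<le> (\<phi> s + \<phi> u)/2" for s u
    proof -
      have f: "(2 * s + 2 * u) / 2 = s + u" by simp
      have e: "(z + s *\<^sub>R v) + (z + u *\<^sub>R v) = (2::real) *\<^sub>R (z + ((s+u)/2) *\<^sub>R v)"
        by (simp add: scaleR_add_right scaleR_add_left scaleR_2 add_ac f)
      have "z + ((s+u)/2) *\<^sub>R v = ((z + s *\<^sub>R v) + (z + u *\<^sub>R v)) /\<^sub>R 2"
        by (simp add: e)
      then show ?thesis unfolding \<phi>_def using kmid by simp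
    qed
    ultimately have "\<phi> t \<le> (1-t) * \<phi> 0 + t * \<phi> 1" by (intro midconv_line[OF _ _ t]) auto
    then show ?thesis unfolding \<phi>_def by simp
  qed
  define v where "v = y - x"
  define R where "R z t = k (z + v) - k z - c * (2 * (z \<bullet> v) + t * (norm v)\<^sup>2)" for z t
  have quot: "(h (z + t *\<^sub>R v) - h z) / t \<le> R z t" if t: "0 < t" "t \<le> 1" for z t
    unfolding R_def
    by (rule aux3[OF kconv[of t z v] _ _ norm_add_sq[of z t v] t(1)]) (use t in \<open>auto simp: k_def\<close>)
  let ?Fl = "nhds x \<times>\<^sub>F at_right (0::real)"
  have nb: "?Fl \<noteq> bot" by (simp add: prod_filter_eq_bot)
  have ev: "\<forall>\<^sub>F p in ?Fl. 0 < snd p \<and> snd p \<le> 1"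
  proof -
    have "\<forall>\<^sub>F t in at_right (0::real). 0 < t \<and> t \<le> 1"
      unfolding eventually_at_right_field by (rule exI[of _ 1]) auto
    then have "\<forall>\<^sub>F (z, t) in ?Fl. 0 < t \<and> t \<le> 1" by (subst eventually_prod2) auto
    then show ?thesis by (simp add: case_prod_beta')
  qed
  have "ereal (\<zeta> \<bullet> v) \<le> clarke_dd h x v" using zeta unfolding clarke_grad_def by blast
  also have "clarke_dd h x v \<le> Limsup ?Fl (\<lambda>p. ereal (R (fst p) (snd p)))"
    unfolding clarke_dd_def case_prod_beta'
  proof (rule Limsup_mono)
    show "\<forall>\<^sub>F p in ?Fl. ereal ((h (fst p + snd p *\<^sub>R v) - h (fst p)) / snd p) \<le> ereal (R (fst p) (snd p))"
      using ev by (rule eventually_mono) (use quot in simp)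
  qed
  also have "\<dots> = ereal (R x 0)"
  proof (rule lim_imp_Limsup)
    show "\<not> trivial_limit ?Fl" using nb by simp
    have f: "(fst \<longlongrightarrow> x) ?Fl" using filterlim_fst by (metis filterlim_def)
    have s: "(snd \<longlongrightarrow> 0) ?Fl"
      using filterlim_snd[of "at_right (0::real)" "nhds x"]
      by (metis filterlim_mono order_refl at_within_le_nhds)
    have kx: "isCont k z" for z using kc by (simp add: continuous_on_eq_continuous_at)
    have "((\<lambda>p. R (fst p) (snd p)) \<longlongrightarrow> R x 0) ?Fl"
      unfolding R_def
      by (intro tendsto_intros isCont_tendsto_compose[OF kx] f s)
    then show "((\<lambda>p. ereal (R (fst p) (snd p))) \<longlongrightarrow> ereal (R x 0)) ?Fl" by simp
  qed
  finally have "ereal (\<zeta> \<bullet> v) \<le> ereal (R x 0)" .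
  then have zv: "\<zeta> \<bullet> v \<le> R x 0" by simp
  have xv: "x + v = y" unfolding v_def by simp
  have zv2: "\<zeta> \<bullet> v \<le> h y + c * (norm y)\<^sup>2 - (h x + c * (norm x)\<^sup>2) - c * (2 * (x \<bullet> v) + 0 * (norm v)\<^sup>2)"
    using zv unfolding R_def k_def xv .
  have nid: "(norm y)\<^sup>2 - (norm x)\<^sup>2 - 2 * (x \<bullet> v) = (norm v)\<^sup>2"
    unfolding v_def power2_norm_eq_inner by (simp add: inner_diff_left inner_diff_right inner_commute)
  show ?thesis unfolding v_def[symmetric] by (rule aux4[OF zv2 nid])
qed

lemma arith_comb:
  fixes A B C D KK a b c dx e' ps pt :: real
  assumes T1: "\<bar>(A - B) - (C - D)\<bar> \<le> KK * a * b"
    and T2: "D + dx - c * a\<^sup>2 \<le> B"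
    and K: "KK \<ge> 0" and ab: "a \<ge> 0" "b \<ge> 0"
    and psi: "(dx - c * a\<^sup>2 + C - KK/2 * (a\<^sup>2 + b\<^sup>2)) - D \<ge> - e'"
  shows "D - e' \<le> A"
proof -
  have "a * b \<le> (a\<^sup>2 + b\<^sup>2)/2" using sum_squares_bound[of a b] by simp
  then have "KK * (a * b) \<le> KK * ((a\<^sup>2 + b\<^sup>2)/2)" by (rule mult_left_mono[OF _ K])
  then have "KK * a * b \<le> KK/2 * (a\<^sup>2 + b\<^sup>2)" by (simp add: mult.assoc)
  then show ?thesis using T1 T2 psi by (simp add: abs_le_iff)
qed

locale HG = HF F L for F :: "'a::euclidean_space \<Rightarrow> 'a set" and L +
  fixes K1 c0 :: real
  assumes H2_ex: "\<And>y q. q \<noteq> 0 \<Longrightarrow> \<exists>g. ((\<lambda>r. hamiltonian F y r) has_derivative (\<lambda>h. g \<bullet> h)) (at q)"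
    and K10: "K1 \<ge> 0"
    and H2_lip: "\<And>y z q. q \<noteq> 0 \<Longrightarrow> norm (grad_p_H F y q - grad_p_H F z q) \<le> K1 * norm (y - z)"
    and c00: "c0 \<ge> 0"
    and H1: "\<And>q. semiconvex_with (c0 * norm q) (\<lambda>y. hamiltonian F y q)"
begin

abbreviation "G \<equiv> grad_p_H F"

lemma grad_deriv: "q \<noteq> 0 \<Longrightarrow> ((\<lambda>r. H y r) has_derivative (\<lambda>h. G y q \<bullet> h)) (at q)"
  unfolding grad_p_H_def by (rule someI_ex[OF H2_ex])

lemma cross:
  assumes q: "norm (q' - q) < norm q"
  shows "\<bar>(H z q' - H z q) - (H y q' - H y q)\<bar> \<le> K1 * norm (z - y) * norm (q' - q)"
proof -
  have nz: "r \<noteq> 0" if rs: "r \<in> closed_segment q q'" for r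
  proof
    assume r0: "r = 0"
    obtain u where u: "u \<in> {0..1}" "r = (1 - u) *\<^sub>R q + u *\<^sub>R q'" using rs by (auto simp: in_segment)
    then have "r = q + u *\<^sub>R (q' - q)" by (simp add: algebra_simps)
    then have "q = - (u *\<^sub>R (q' - q))" using r0 by (simp add: eq_neg_iff_add_eq_0)
    then have "norm q = norm (- (u *\<^sub>R (q' - q)))" by (rule arg_cong)
    then have "norm q = \<bar>u\<bar> * norm (q' - q)" by (simp only: norm_minus_cancel norm_scaleR)
    then have "norm q = u * norm (q' - q)" using u(1) by simp
    also have "\<dots> \<le> norm (q' - q)" using u(1) by (simp add: mult_left_le_one_le)
    finally show False using q by simp
  qed
  define f where "f r = H z r - H y r" for r
  have der: "(f has_derivative (\<lambda>h. (G z r - G y r) \<bullet> h)) (at r within closed_segment q q')"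
    if "r \<in> closed_segment q q'" for r
  proof -
    have "(f has_derivative (\<lambda>h. G z r \<bullet> h - G y r \<bullet> h)) (at r)"
      unfolding f_def by (intro has_derivative_diff grad_deriv nz[OF that])
    then show ?thesis by (simp add: inner_diff_left has_derivative_at_withinI)
  qed
  have bnd: "onorm (\<lambda>h. (G z r - G y r) \<bullet> h) \<le> K1 * norm (z - y)"
    if "r \<in> closed_segment q q'" for r
  proof (rule onorm_le)
    fix h
    have "norm ((G z r - G y r) \<bullet> h) \<le> norm (G z r - G y r) * norm h"
      using Cauchy_Schwarz_ineq2 by simp
    also have "\<dots> \<le> K1 * norm (z - y) * norm h"
      using H2_lip[OF nz[OF that], of z y] by (intro mult_right_mono) auto
    finally show "norm ((G z r - G y r) \<bullet> h) \<le> K1 * norm (z - y) * norm h" .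
  qed
  have "norm (f q' - f q) \<le> K1 * norm (z - y) * norm (q' - q)"
    by (rule differentiable_bound[OF convex_closed_segment der bnd]) auto
  then show ?thesis unfolding f_def by (simp add: algebra_simps)
qed

lemma main_cond:
  fixes x p :: "real \<Rightarrow> 'a" and T :: "real set" and t :: real and dp :: 'a
  assumes t: "t \<in> T"
    and dx: "(x has_vector_derivative G (x t) (p t)) (at t within T)"
    and dpd: "(p has_vector_derivative dp) (at t within T)"
    and cg: "- dp \<in> clarke_grad (\<lambda>y. H y (p t)) (x t)"
    and pt: "p t \<noteq> 0"
    and e: "e > 0"
  shows "\<exists>d>0. \<forall>s\<in>T. \<bar>s - t\<bar> < d \<longrightarrow> H (x t) (p t) - e * \<bar>s - t\<bar> \<le> H (x s) (p s)"
proof -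
  define y where "y = x t"
  define q where "q = p t"
  define Gq where "Gq = G y q"
  define c where "c = c0 * norm q"
  define \<psi> where "\<psi> s = - (dp \<bullet> x s) - c * ((x s - y) \<bullet> (x s - y)) + H y (p s)
      - K1/2 * ((x s - y) \<bullet> (x s - y) + (p s - q) \<bullet> (p s - q))" for s
  have hx: "(x has_derivative (\<lambda>h. h *\<^sub>R Gq)) (at t within T)"
    using dx unfolding has_vector_derivative_def Gq_def y_def q_def .
  have hp: "(p has_derivative (\<lambda>h. h *\<^sub>R dp)) (at t within T)"
    using dpd unfolding has_vector_derivative_def .
  have hHp: "((\<lambda>s. H y (p s)) has_derivative (\<lambda>h. Gq \<bullet> (h *\<^sub>R dp))) (at t within T)"
    using has_derivative_compose[OF hp grad_deriv[OF pt, of y]] unfolding Gq_def q_def .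
  have h\<psi>: "(\<psi> has_derivative (\<lambda>h. 0)) (at t within T)"
    unfolding \<psi>_def
    by (auto intro!: derivative_eq_intros hx hp hHp simp: fun_eq_iff y_def[symmetric] q_def[symmetric] inner_commute)
  have pc: "continuous (at t within T) p" using dpd by (rule has_vector_derivative_continuous)
  have nq: "norm q > 0" using pt unfolding q_def by simp
  obtain d1 where d1: "d1 > 0" "\<forall>s\<in>T. dist s t < d1 \<longrightarrow> dist (p s) (p t) < norm q"
    using pc nq unfolding continuous_within_eps_delta by blast
  obtain d2 where d2: "d2 > 0" "\<forall>s\<in>T. norm (s - t) < d2 \<longrightarrow> norm (\<psi> s - \<psi> t - 0) \<le> e * norm (s - t)"
    using h\<psi> e unfolding has_derivative_within_alt by auto
  show ?thesis
  proof (intro exI[of _ "min d1 d2"] conjI ballI impI)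
    show "0 < min d1 d2" using d1 d2 by simp
    fix s assume s: "s \<in> T" and st: "\<bar>s - t\<bar> < min d1 d2"
    have pq: "norm (p s - q) < norm q" using d1(2) s st unfolding q_def by (auto simp: dist_norm)
    have T1: "\<bar>(H (x s) (p s) - H (x s) q) - (H y (p s) - H y q)\<bar> \<le> K1 * norm (x s - y) * norm (p s - q)"
      by (rule cross[OF pq])
    have T2: "H y q + (- dp) \<bullet> (x s - y) - c * (norm (x s - y))\<^sup>2 \<le> H (x s) q"
      using semiconvex_subgrad[OF H1[of q], of "- dp" y "x s"] cg unfolding c_def y_def q_def by simp
    have ps: "\<psi> s - \<psi> t \<ge> - (e * \<bar>s - t\<bar>)" using d2(2) s st by force
    have ps2: "\<psi> s - \<psi> t = ((- dp) \<bullet> (x s - y) - c * (norm (x s - y))\<^sup>2 + H y (p s)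
        - K1/2 * ((norm (x s - y))\<^sup>2 + (norm (p s - q))\<^sup>2)) - H y q"
      unfolding \<psi>_def power2_norm_eq_inner by (simp add: y_def q_def inner_diff_right)
    have "H y q - e * \<bar>s - t\<bar> \<le> H (x s) (p s)"
      by (rule arith_comb[OF T1 T2 K10 norm_ge_zero norm_ge_zero]) (use ps ps2 in simp)
    then show "H (x t) (p t) - e * \<bar>s - t\<bar> \<le> H (x s) (p s)" unfolding y_def q_def .
  qed
qed

end

lemma ac_lip_comb:
  fixes x p :: "real \<Rightarrow> 'a::real_normed_vector" and g :: "real \<Rightarrow> real"
  assumes ax: "abs_cont_on a b x" and ap: "abs_cont_on a b p" and C: "C \<ge> 0"
    and bnd: "\<And>u v. a \<le> u \<Longrightarrow> u \<le> v \<Longrightarrow> v \<le> b \<Longrightarrow>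
         \<bar>g v - g u\<bar> \<le> C * (norm (x v - x u) + norm (p v - p u) + (v - u))"
  shows "abs_cont_on a b g"
  unfolding abs_cont_on_def
proof (intro allI impI)
  fix \<epsilon> :: real assume e: "\<epsilon> > 0"
  define e' where "e' = \<epsilon> / (3 * (C + 1))"
  have e': "e' > 0" using e C unfolding e'_def by simp
  obtain d1 where d1: "d1 > 0" and H1: "\<forall>(n::nat) (u::nat \<Rightarrow> real) v.
        (\<forall>i<n. a \<le> u i \<and> u i \<le> v i \<and> v i \<le> b) \<and>
        (\<forall>i<n. \<forall>j<n. i \<noteq> j \<longrightarrow> v i \<le> u j \<or> v j \<le> u i) \<and>
        (\<Sum>i<n. v i - u i) < d1
        \<longrightarrow> (\<Sum>i<n. norm (x (v i) - x (u i))) < e'"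
    using ax e' unfolding abs_cont_on_def by blast
  obtain d2 where d2: "d2 > 0" and H2: "\<forall>(n::nat) (u::nat \<Rightarrow> real) v.
        (\<forall>i<n. a \<le> u i \<and> u i \<le> v i \<and> v i \<le> b) \<and>
        (\<forall>i<n. \<forall>j<n. i \<noteq> j \<longrightarrow> v i \<le> u j \<or> v j \<le> u i) \<and>
        (\<Sum>i<n. v i - u i) < d2
        \<longrightarrow> (\<Sum>i<n. norm (p (v i) - p (u i))) < e'"
    using ap e' unfolding abs_cont_on_def by blast
  show "\<exists>\<delta>>0. \<forall>(n::nat) (u::nat \<Rightarrow> real) v.
        (\<forall>i<n. a \<le> u i \<and> u i \<le> v i \<and> v i \<le> b) \<and>
        (\<forall>i<n. \<forall>j<n. i \<noteq> j \<longrightarrow> v i \<le> u j \<or> v j \<le> u i) \<and>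
        (\<Sum>i<n. v i - u i) < \<delta>
        \<longrightarrow> (\<Sum>i<n. norm (g (v i) - g (u i))) < \<epsilon>"
  proof (intro exI[of _ "min (min d1 d2) e'"] conjI allI impI)
    show "0 < min (min d1 d2) e'" using d1 d2 e' by simp
    fix n :: nat and u v :: "nat \<Rightarrow> real"
    assume A: "(\<forall>i<n. a \<le> u i \<and> u i \<le> v i \<and> v i \<le> b) \<and>
        (\<forall>i<n. \<forall>j<n. i \<noteq> j \<longrightarrow> v i \<le> u j \<or> v j \<le> u i) \<and>
        (\<Sum>i<n. v i - u i) < min (min d1 d2) e'"
    have sx: "(\<Sum>i<n. norm (x (v i) - x (u i))) < e'" using H1 A by auto
    have sp: "(\<Sum>i<n. norm (p (v i) - p (u i))) < e'" using H2 A by auto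
    have sl: "(\<Sum>i<n. v i - u i) < e'" using A by auto
    have "(\<Sum>i<n. norm (g (v i) - g (u i))) \<le>
          (\<Sum>i<n. C * (norm (x (v i) - x (u i)) + norm (p (v i) - p (u i)) + (v i - u i)))"
      using A bnd by (intro sum_mono) auto
    also have "\<dots> = C * ((\<Sum>i<n. norm (x (v i) - x (u i))) + (\<Sum>i<n. norm (p (v i) - p (u i)))
        + (\<Sum>i<n. v i - u i))"
      by (simp add: sum_distrib_left sum.distrib distrib_left)
    also have "\<dots> \<le> C * (3 * e')"
      using sx sp sl C by (intro mult_left_mono) auto
    also have "\<dots> < \<epsilon>"
    proof -
      have "C * (3 * e') = \<epsilon> * (C / (C + 1))" unfolding e'_def using C by (simp add: field_simps)
      also have "\<dots> < \<epsilon> * 1" using C e by (intro mult_strict_left_mono) auto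
      finally show ?thesis by simp
    qed
    finally show "(\<Sum>i<n. norm (g (v i) - g (u i))) < \<epsilon>" .
  qed
qed

lemma deriv_mono:
  fixes f :: "real \<Rightarrow> real"
  assumes ac: "abs_cont_on a b f" and ab: "a \<le> b" and N: "N \<in> null_sets lebesgue"
    and D: "\<And>t. t \<in> {a..<b} - N \<Longrightarrow> \<exists>D\<ge>0. (f has_vector_derivative D) (at t within {a..b})"
  shows "f a \<le> f b"
proof (rule ac_mono_right[OF ac ab N])
  fix t e :: real assume t: "t \<in> {a..<b} - N" and e: "e > 0"
  obtain Dt where Dt: "Dt \<ge> 0" "(f has_vector_derivative Dt) (at t within {a..b})" using D[OF t] by blast
  then have "(f has_derivative (\<lambda>h. h *\<^sub>R Dt)) (at t within {a..b})" unfolding has_vector_derivative_def by simp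
  then obtain d where d: "d > 0" "\<forall>y\<in>{a..b}. norm (y - t) < d \<longrightarrow> norm (f y - f t - (y - t) *\<^sub>R Dt) \<le> e * norm (y - t)"
    using e unfolding has_derivative_within_alt by blast
  show "\<exists>d>0. \<forall>s. t < s \<and> s < t + d \<and> s \<le> b \<longrightarrow> f t - e * (s - t) \<le> f s"
  proof (intro exI[of _ d] conjI allI impI)
    fix s assume s: "t < s \<and> s < t + d \<and> s \<le> b"
    then have sab: "s \<in> {a..b}" "norm (s - t) < d" using t by auto
    have "\<bar>f s - f t - (s - t) * Dt\<bar> \<le> e * \<bar>s - t\<bar>" using d(2) sab by auto
    then have "\<bar>f s - f t - (s - t) * Dt\<bar> \<le> e * (s - t)" using s by simp
    moreover have "(s - t) * Dt \<ge> 0" using s Dt by simp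
    ultimately show "f t - e * (s - t) \<le> f s" by (simp add: abs_le_iff)
  qed (rule d(1))
qed

lemma traj_lin_bound:
  fixes x :: "real \<Rightarrow> 'a::euclidean_space"
  assumes ac: "abs_cont_on a b x" and ab: "a \<le> b" and N: "N \<in> null_sets lebesgue"
    and D: "\<And>t. t \<in> {a..<b} - N \<Longrightarrow> \<exists>d. (x has_vector_derivative d) (at t within {a..b}) \<and> w \<bullet> d \<le> K"
  shows "w \<bullet> (x b - x a) \<le> K * (b - a)"
proof -
  define f where "f s = K * s - w \<bullet> x s" for s
  have acf: "abs_cont_on a b f"
  proof (rule ac_lip_comb[OF ac ac, of "\<bar>K\<bar> + norm w"])
    show "0 \<le> \<bar>K\<bar> + norm w" by simp
    fix u v assume uv: "a \<le> u" "u \<le> v" "v \<le> b"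
    have "\<bar>f v - f u\<bar> = \<bar>K * (v - u) - w \<bullet> (x v - x u)\<bar>" unfolding f_def by (simp add: algebra_simps inner_diff_right)
    also have "\<dots> \<le> \<bar>K\<bar> * (v - u) + norm w * norm (x v - x u)"
      using Cauchy_Schwarz_ineq2[of w "x v - x u"] uv by (simp add: abs_mult abs_triangle_ineq4 order_trans[OF abs_triangle_ineq4])
    also have "\<dots> \<le> (\<bar>K\<bar> + norm w) * (norm (x v - x u) + norm (x v - x u) + (v - u))"
    proof -
      have h1: "\<bar>K\<bar> * (v - u) \<le> \<bar>K\<bar> * (norm (x v - x u) + norm (x v - x u) + (v - u))"
        by (rule mult_left_mono) (use uv in auto)
      have h2: "norm w * norm (x v - x u) \<le> norm w * (norm (x v - x u) + norm (x v - x u) + (v - u))"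
        by (rule mult_left_mono) (use uv in auto)
      show ?thesis using h1 h2 by (simp add: distrib_right)
    qed
    finally show "\<bar>f v - f u\<bar> \<le> (\<bar>K\<bar> + norm w) * (norm (x v - x u) + norm (x v - x u) + (v - u))" .
  qed
  have "f a \<le> f b"
  proof (rule deriv_mono[OF acf ab N])
    fix t assume t: "t \<in> {a..<b} - N"
    obtain d where d: "(x has_vector_derivative d) (at t within {a..b})" "w \<bullet> d \<le> K" using D[OF t] by blast
    have hx: "(x has_derivative (\<lambda>h. h *\<^sub>R d)) (at t within {a..b})" using d(1) unfolding has_vector_derivative_def .
    have "(f has_vector_derivative (K - w \<bullet> d)) (at t within {a..b})"
      unfolding has_vector_derivative_def f_def
      by (auto intro!: derivative_eq_intros hx simp: fun_eq_iff algebra_simps)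
    then show "\<exists>D\<ge>0. (f has_vector_derivative D) (at t within {a..b})" using d(2) by (intro exI[of _ "K - w \<bullet> d"]) auto
  qed
  then show ?thesis unfolding f_def by (simp add: algebra_simps inner_diff_right)
qed

theorem proposition4p2:
  fixes F :: "'a::euclidean_space \<Rightarrow> 'a set"
    and S :: "'a set" and x0 :: 'a and \<tau> :: real
    and x p :: "real \<Rightarrow> 'a" and \<xi> :: 'a
  assumes F_ne: "\<And>y. F y \<noteq> {}"
    and F_convex: "\<And>y. convex (F y)"
    and F_compact: "\<And>y. compact (F y)"
    and F_lip: "lipschitz_multifun F"
    and H1: "\<exists>c0\<ge>0. \<forall>q. semiconvex_with (c0 * norm q) (\<lambda>y. hamiltonian F y q)"
    and H2_ex: "\<And>y q. q \<noteq> 0 \<Longrightarrow>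
        \<exists>g. ((\<lambda>r. hamiltonian F y r) has_derivative (\<lambda>h. g \<bullet> h)) (at q)"
    and H2_lip: "\<exists>K1\<ge>0. \<forall>y z q. q \<noteq> 0 \<longrightarrow>
        norm (grad_p_H F y q - grad_p_H F z q) \<le> K1 * norm (y - z)"
    and S_closed: "closed S"
    and x0_notin: "x0 \<notin> S"
    and T_x0: "min_time F S x0 = ereal \<tau>"
    and x_traj: "trajectory F \<tau> x"
    and x_start: "x 0 = x0"
    and x_end: "x \<tau> \<in> S"
    and \<xi>_unit: "norm \<xi> = 1"
    and \<xi>_normal: "\<xi> \<in> proximal_normal (closure (UNIV - S)) (x \<tau>)"
    and p_ac: "abs_cont_on 0 \<tau> p"
    and p_ne: "\<And>t. t \<in> {0..\<tau>} \<Longrightarrow> p t \<noteq> 0"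
    and adj: "\<exists>N. N \<in> null_sets lebesgue \<and> (\<forall>t\<in>{0..\<tau>} - N.
        (\<exists>d. (p has_vector_derivative d) (at t within {0..\<tau>}) \<and>
             - d \<in> clarke_grad (\<lambda>y. hamiltonian F y (p t)) (x t)) \<and>
        (x has_vector_derivative grad_p_H F (x t) (p t)) (at t within {0..\<tau>}))"
  shows "(hamiltonian F (x \<tau>) \<xi> \<noteq> 0 \<and> p \<tau> = \<xi> /\<^sub>R hamiltonian F (x \<tau>) \<xi>
            \<longrightarrow> (\<forall>t\<in>{0..\<tau>}. hamiltonian F (x t) (p t) = 1))
       \<and> (hamiltonian F (x \<tau>) \<xi> = 0 \<and> p \<tau> = \<xi>
            \<longrightarrow> (\<forall>t\<in>{0..\<tau>}. hamiltonian F (x t) (p t) = 0))"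
proof -
  obtain L where L0: "L \<ge> 0" and Lip: "\<forall>x y. \<forall>v\<in>F x. \<exists>w\<in>F y. dist v w \<le> L * dist x y"
    using F_lip unfolding lipschitz_multifun_def by blast
  obtain c0 where c00: "c0 \<ge> 0" and H1': "\<forall>q. semiconvex_with (c0 * norm q) (\<lambda>y. hamiltonian F y q)"
    using H1 by blast
  obtain K1 where K10: "K1 \<ge> 0" and H2l: "\<forall>y z q. q \<noteq> 0 \<longrightarrow>
        norm (grad_p_H F y q - grad_p_H F z q) \<le> K1 * norm (y - z)"
    using H2_lip by blast
  interpret HG F L K1 c0
    by unfold_locales (use F_ne F_compact L0 Lip H2_ex K10 H2l c00 H1' in auto)
  have x_ac: "abs_cont_on 0 \<tau> x" using x_traj unfolding trajectory_def by blast
  obtain N1 where N1: "N1 \<in> null_sets lebesgue"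
    and N1d: "\<And>t. t \<in> {0..\<tau>} - N1 \<Longrightarrow> \<exists>d. (x has_vector_derivative d) (at t within {0..\<tau>}) \<and> d \<in> F (x t)"
    using x_traj unfolding trajectory_def by blast
  obtain N2 where N2: "N2 \<in> null_sets lebesgue"
    and N2d: "\<And>t. t \<in> {0..\<tau>} - N2 \<Longrightarrow> (\<exists>d. (p has_vector_derivative d) (at t within {0..\<tau>}) \<and>
             - d \<in> clarke_grad (\<lambda>y. hamiltonian F y (p t)) (x t)) \<and>
        (x has_vector_derivative grad_p_H F (x t) (p t)) (at t within {0..\<tau>})"
    using adj by blast
  define D where "D = {\<tau>'. \<tau>' > 0 \<and> (\<exists>y. trajectory F \<tau>' y \<and> y 0 = x0 \<and> y \<tau>' \<in> S)}"
  have TD: "Inf (ereal ` D) = ereal \<tau>" using T_x0 unfolding min_time_def D_def .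
  have "0 \<le> Inf (ereal ` D)" unfolding D_def by (rule Inf_greatest) auto
  then have tau0: "0 \<le> \<tau>" using TD by simp
  have "\<tau> \<noteq> 0" using x_start x_end x0_notin by auto
  then have taupos: "\<tau> > 0" using tau0 by simp
  have noS: "x s \<notin> S" if s: "0 \<le> s" "s < \<tau>" for s
  proof (cases "s = 0")
    case True then show ?thesis using x_start x0_notin by simp
  next
    case False
    then have s0: "s > 0" using s by simp
    show ?thesis
    proof
      assume xs: "x s \<in> S"
      have "trajectory F s x"
        unfolding trajectory_def
      proof (intro conjI exI[of _ N1])
        show "abs_cont_on 0 s x" by (rule ac_sub[OF x_ac]) (use s in auto)
        show "N1 \<in> null_sets lebesgue" by (rule N1)
        show "\<forall>t\<in>{0..s} - N1. \<exists>d. (x has_vector_derivative d) (at t within {0..s}) \<and> d \<in> F (x t)"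
        proof
          fix t assume t: "t \<in> {0..s} - N1"
          then have "t \<in> {0..\<tau>} - N1" using s by auto
          then obtain d where "(x has_vector_derivative d) (at t within {0..\<tau>})" "d \<in> F (x t)" using N1d by blast
          then show "\<exists>d. (x has_vector_derivative d) (at t within {0..s}) \<and> d \<in> F (x t)"
            using s by (intro exI[of _ d]) (auto intro: has_vector_derivative_within_subset)
        qed
      qed
      then have "s \<in> D" unfolding D_def using s0 x_start xs by blast
      then have "Inf (ereal ` D) \<le> ereal s" by (simp add: Inf_lower)
      then show False using TD s by simp
    qed
  qed
  have cx: "continuous_on {0..\<tau>} x" by (rule ac_cont[OF x_ac])
  have cp: "continuous_on {0..\<tau>} p" by (rule ac_cont[OF p_ac])
  obtain Mx where Mx: "\<forall>t\<in>{0..\<tau>}. norm (x t) \<le> Mx"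
    using compact_imp_bounded[OF compact_continuous_image[OF cx compact_Icc]] unfolding bounded_iff by auto
  obtain Mp where Mp: "\<forall>t\<in>{0..\<tau>}. norm (p t) \<le> Mp"
    using compact_imp_bounded[OF compact_continuous_image[OF cp compact_Icc]] unfolding bounded_iff by auto
  have Mx0: "Mx \<ge> 0" using Mx tau0 by (meson atLeastAtMost_iff norm_ge_zero order_refl order_trans)
  have Mp0: "Mp \<ge> 0" using Mp tau0 by (meson atLeastAtMost_iff norm_ge_zero order_refl order_trans)
  define g where "g t = H (x t) (p t)" for t
  define C where "C = L * Mp + \<bar>B0\<bar> + L * Mx"
  have C0: "C \<ge> 0" unfolding C_def using L0 Mx0 Mp0 by simp
  have g_ac: "abs_cont_on 0 \<tau> g"
  proof (rule ac_lip_comb[OF x_ac p_ac C0])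
    fix u v assume uv: "0 \<le> u" "u \<le> v" "v \<le> \<tau>"
    have "\<bar>g v - g u\<bar> \<le> \<bar>H (x v) (p v) - H (x u) (p v)\<bar> + \<bar>H (x u) (p v) - H (x u) (p u)\<bar>"
      unfolding g_def by linarith
    also have "\<dots> \<le> L * norm (p v) * norm (x v - x u) + (B0 + L * norm (x u)) * norm (p v - p u)"
      using H_lip_x_abs H_lip_p_abs by (intro add_mono)
    also have "\<dots> \<le> (L * Mp) * norm (x v - x u) + (\<bar>B0\<bar> + L * Mx) * norm (p v - p u)"
    proof -
      have a1: "L * norm (p v) \<le> L * Mp" using Mp uv L0 by (intro mult_left_mono) auto
      have a2: "B0 + L * norm (x u) \<le> \<bar>B0\<bar> + L * Mx" using Mx uv L0 by (intro add_mono mult_left_mono) auto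
      show ?thesis by (rule add_mono[OF mult_right_mono[OF a1 norm_ge_zero] mult_right_mono[OF a2 norm_ge_zero]])
    qed
    also have "\<dots> \<le> C * (norm (x v - x u) + norm (p v - p u) + (v - u))"
    proof -
      have "(L * Mp) * norm (x v - x u) \<le> C * norm (x v - x u)"
        unfolding C_def using L0 Mx0 by (intro mult_right_mono) auto
      moreover have "(\<bar>B0\<bar> + L * Mx) * norm (p v - p u) \<le> C * norm (p v - p u)"
        unfolding C_def using L0 Mp0 by (intro mult_right_mono) auto
      moreover have "0 \<le> C * (v - u)" using C0 uv by simp
      ultimately show ?thesis by (simp add: distrib_left)
    qed
    finally show "\<bar>g v - g u\<bar> \<le> C * (norm (x v - x u) + norm (p v - p u) + (v - u))" .
  qed
  have cond: "\<exists>d>0. \<forall>s\<in>{0..\<tau>}. \<bar>s - t\<bar> < d \<longrightarrow> g t - e * \<bar>s - t\<bar> \<le> g s"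
    if t: "t \<in> {0..\<tau>} - N2" and e: "e > 0" for t e
  proof -
    obtain dp where dp: "(p has_vector_derivative dp) (at t within {0..\<tau>})"
      "- dp \<in> clarke_grad (\<lambda>y. hamiltonian F y (p t)) (x t)"
      and dx: "(x has_vector_derivative grad_p_H F (x t) (p t)) (at t within {0..\<tau>})"
      using N2d[OF t] by blast
    have pt: "p t \<noteq> 0" using p_ne t by auto
    show ?thesis unfolding g_def
      by (rule main_cond[OF _ dx dp(1) dp(2) pt e]) (use t in auto)
  qed
  have gconst: "g t = g \<tau>" if t: "t \<in> {0..\<tau>}" for t
  proof (rule antisym)
    show "g t \<le> g \<tau>"
    proof (rule ac_mono_right[OF ac_sub[OF g_ac] _ N2])
      show "0 \<le> t" "\<tau> \<le> \<tau>" "t \<le> \<tau>" using t by auto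
      fix t' e assume t': "t' \<in> {t..<\<tau>} - N2" and e: "(e::real) > 0"
      then have t'': "t' \<in> {0..\<tau>} - N2" using t by auto
      obtain d where d: "d > 0" "\<forall>s\<in>{0..\<tau>}. \<bar>s - t'\<bar> < d \<longrightarrow> g t' - e * \<bar>s - t'\<bar> \<le> g s"
        using cond[OF t'' e] by blast
      show "\<exists>d>0. \<forall>s. t' < s \<and> s < t' + d \<and> s \<le> \<tau> \<longrightarrow> g t' - e * (s - t') \<le> g s"
      proof (intro exI[of _ d] conjI allI impI)
        fix s assume s: "t' < s \<and> s < t' + d \<and> s \<le> \<tau>"
        then have "s \<in> {0..\<tau>}" "\<bar>s - t'\<bar> < d" using t'' by auto
        then have "g t' - e * \<bar>s - t'\<bar> \<le> g s" using d(2) by blast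
        then show "g t' - e * (s - t') \<le> g s" using s by simp
      qed (rule d(1))
    qed
    show "g \<tau> \<le> g t"
    proof (rule ac_mono_left[OF ac_sub[OF g_ac] _ N2])
      show "0 \<le> t" "\<tau> \<le> \<tau>" "t \<le> \<tau>" using t by auto
      fix t' e assume t': "t' \<in> {t<..\<tau>} - N2" and e: "(e::real) > 0"
      then have t'': "t' \<in> {0..\<tau>} - N2" using t by auto
      obtain d where d: "d > 0" "\<forall>s\<in>{0..\<tau>}. \<bar>s - t'\<bar> < d \<longrightarrow> g t' - e * \<bar>s - t'\<bar> \<le> g s"
        using cond[OF t'' e] by blast
      show "\<exists>d>0. \<forall>s. t' - d < s \<and> s < t' \<and> t \<le> s \<longrightarrow> g t' - e * (t' - s) \<le> g s"
      proof (intro exI[of _ d] conjI allI impI)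
        fix s assume s: "t' - d < s \<and> s < t' \<and> t \<le> s"
        then have "s \<in> {0..\<tau>}" "\<bar>s - t'\<bar> < d" using t'' t by auto
        then have "g t' - e * \<bar>s - t'\<bar> \<le> g s" using d(2) by blast
        then show "g t' - e * (t' - s) \<le> g s" using s by simp
      qed (rule d(1))
    qed
  qed
  define h where "h = H (x \<tau>) \<xi>"
  have hnn: "h \<ge> 0"
  proof (rule ccontr)
    assume "\<not> h \<ge> 0"
    then have hneg: "h < 0" by simp
    define M where "M = \<bar>B0\<bar> + L * Mx"
    have M0: "M \<ge> 0" unfolding M_def using L0 Mx0 by simp
    have dbound: "norm d \<le> M" if "d \<in> F (x t)" "t \<in> {0..\<tau>}" for d t
    proof -
      have "norm d \<le> B0 + L * norm (x t)" by (rule F_bound[OF that(1)])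
      also have "\<dots> \<le> M" unfolding M_def using Mx that(2) L0 by (intro add_mono mult_left_mono) auto
      finally show ?thesis .
    qed
    obtain \<sigma> where \<sigma>: "\<sigma> \<ge> 0" "\<forall>y\<in>closure (UNIV - S). \<xi> \<bullet> (y - x \<tau>) \<le> \<sigma> * (norm (y - x \<tau>))\<^sup>2"
      using \<xi>_normal unfolding proximal_normal_def by blast
    have "continuous (at \<tau> within {0..\<tau>}) x" using cx tau0 by (simp add: continuous_on_eq_continuous_within)
    then have cw: "\<forall>\<epsilon>>0. \<exists>\<delta>>0. \<forall>s\<in>{0..\<tau>}. dist s \<tau> < \<delta> \<longrightarrow> dist (x s) (x \<tau>) < \<epsilon>"
      unfolding continuous_within_eps_delta .
    have pos: "(- h / 2) / (L + 1) > 0" using hneg L0 by (intro divide_pos_pos) auto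
    obtain \<eta> where \<eta>: "\<eta> > 0" "\<forall>s\<in>{0..\<tau>}. dist s \<tau> < \<eta> \<longrightarrow> dist (x s) (x \<tau>) < (- h / 2) / (L + 1)"
      using cw[rule_format, OF pos] by blast
    have near: "L * norm (x s - x \<tau>) \<le> - h / 2" if "s \<in> {0..\<tau>}" "\<tau> - s < \<eta>" for s
    proof -
      have "dist (x s) (x \<tau>) < (- h / 2) / (L + 1)" using \<eta>(2) that by (auto simp: dist_real_def)
      then have "(L + 1) * norm (x s - x \<tau>) < - h / 2" using L0 by (simp add: dist_norm field_simps)
      moreover have "L * norm (x s - x \<tau>) \<le> (L + 1) * norm (x s - x \<tau>)" by (simp add: distrib_right)
      ultimately show ?thesis by linarith
    qed
    have sM: "\<sigma> * M\<^sup>2 \<ge> 0" using \<sigma>(1) by simp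
    define \<delta> where "\<delta> = min (min (\<eta>/2) (\<tau>/2)) ((- h / 4) / (\<sigma> * M\<^sup>2 + 1))"
    have \<delta>: "\<delta> > 0" "\<delta> < \<eta>" "\<delta> < \<tau>" "\<delta> \<le> (- h / 4) / (\<sigma> * M\<^sup>2 + 1)"
    proof -
      have "(- h / 4) / (\<sigma> * M\<^sup>2 + 1) > 0" using hneg sM by (intro divide_pos_pos) auto
      then show "\<delta> > 0" "\<delta> < \<eta>" "\<delta> < \<tau>" "\<delta> \<le> (- h / 4) / (\<sigma> * M\<^sup>2 + 1)"
        unfolding \<delta>_def using \<eta>(1) taupos by auto
    qed
    define s0 where "s0 = \<tau> - \<delta>"
    have s0: "0 \<le> s0" "s0 \<le> \<tau>" "s0 < \<tau>" using \<delta> unfolding s0_def by auto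
    have acs: "abs_cont_on s0 \<tau> x" by (rule ac_sub[OF x_ac]) (use s0 in auto)
    have b1: "\<xi> \<bullet> (x \<tau> - x s0) \<le> (h/2) * (\<tau> - s0)"
    proof (rule traj_lin_bound[OF acs s0(2) N1])
      fix t assume t: "t \<in> {s0..<\<tau>} - N1"
      then have t0: "t \<in> {0..\<tau>} - N1" using s0 by auto
      obtain d where d: "(x has_vector_derivative d) (at t within {0..\<tau>})" "d \<in> F (x t)" using N1d[OF t0] by blast
      have "\<xi> \<bullet> d \<le> H (x t) \<xi>" by (rule H_ge[OF d(2)])
      also have "\<dots> \<le> h + L * norm \<xi> * norm (x t - x \<tau>)" unfolding h_def by (rule H_lip_x)
      also have "\<dots> \<le> h/2" using near[of t] t0 t s0 \<delta> \<xi>_unit unfolding s0_def by auto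
      finally show "\<exists>d. (x has_vector_derivative d) (at t within {s0..\<tau>}) \<and> \<xi> \<bullet> d \<le> h / 2"
        using d(1) s0 by (intro exI[of _ d]) (auto intro: has_vector_derivative_within_subset)
    qed
    define w where "w = x \<tau> - x s0"
    have b2: "w \<bullet> (x \<tau> - x s0) \<le> (M * norm w) * (\<tau> - s0)"
    proof (rule traj_lin_bound[OF acs s0(2) N1])
      fix t assume t: "t \<in> {s0..<\<tau>} - N1"
      then have t0: "t \<in> {0..\<tau>} - N1" using s0 by auto
      obtain d where d: "(x has_vector_derivative d) (at t within {0..\<tau>})" "d \<in> F (x t)" using N1d[OF t0] by blast
      have "w \<bullet> d \<le> norm w * norm d" by (rule norm_cauchy_schwarz)
      also have "\<dots> \<le> norm w * M" using dbound[OF d(2)] t0 by (intro mult_left_mono) auto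
      finally show "\<exists>d. (x has_vector_derivative d) (at t within {s0..\<tau>}) \<and> w \<bullet> d \<le> M * norm w"
        using d(1) s0 by (intro exI[of _ d]) (auto intro: has_vector_derivative_within_subset simp: mult.commute)
    qed
    have wb: "norm w \<le> M * (\<tau> - s0)"
    proof (cases "w = 0")
      case True then show ?thesis using M0 s0 by simp
    next
      case False
      then have nw: "norm w > 0" by simp
      have "norm w * norm w \<le> (M * (\<tau> - s0)) * norm w"
        using b2 unfolding w_def[symmetric] by (simp add: power2_norm_eq_inner[symmetric] power2_eq_square algebra_simps)
      then show ?thesis using nw by simp
    qed
    have "x s0 \<in> UNIV - S" using noS[OF s0(1) s0(3)] by simp
    then have xc: "x s0 \<in> closure (UNIV - S)" by (rule subsetD[OF closure_subset])
    have "\<xi> \<bullet> (x s0 - x \<tau>) \<le> \<sigma> * (norm (x s0 - x \<tau>))\<^sup>2" using \<sigma>(2) xc by blast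
    then have b3: "\<xi> \<bullet> (x s0 - x \<tau>) \<le> \<sigma> * (norm w)\<^sup>2"
      unfolding w_def by (simp only: norm_minus_commute)
    have "(norm w)\<^sup>2 \<le> (M * \<delta>)\<^sup>2" using wb norm_ge_zero[of w] unfolding s0_def by (intro power_mono) auto
    then have "\<sigma> * (norm w)\<^sup>2 \<le> \<sigma> * (M * \<delta>)\<^sup>2" using \<sigma>(1) by (rule mult_left_mono)
    moreover have "- (h/2) * \<delta> \<le> \<xi> \<bullet> (x s0 - x \<tau>)"
      using b1 unfolding s0_def by (simp add: inner_diff_right)
    ultimately have key: "- (h/2) * \<delta> \<le> \<sigma> * (M * \<delta>)\<^sup>2" using b3 by linarith
    have "\<sigma> * (M * \<delta>)\<^sup>2 = (\<sigma> * M\<^sup>2 * \<delta>) * \<delta>" by (simp add: power2_eq_square)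
    moreover have "\<sigma> * M\<^sup>2 * \<delta> < - h / 2"
    proof -
      have "\<sigma> * M\<^sup>2 * \<delta> \<le> \<sigma> * M\<^sup>2 * ((- h / 4) / (\<sigma> * M\<^sup>2 + 1))"
        using \<delta>(4) \<sigma>(1) by (intro mult_left_mono) auto
      also have "\<dots> \<le> - h / 4"
      proof -
        have "\<sigma> * M\<^sup>2 \<le> \<sigma> * M\<^sup>2 + 1" by simp
        then have "\<sigma> * M\<^sup>2 / (\<sigma> * M\<^sup>2 + 1) \<le> 1" using sM by simp
        then have "(\<sigma> * M\<^sup>2 / (\<sigma> * M\<^sup>2 + 1)) * (- h / 4) \<le> 1 * (- h / 4)"
          using hneg by (intro mult_right_mono) auto
        then show ?thesis by (simp add: field_simps)
      qed
      also have "\<dots> < - h / 2" using hneg by simp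
      finally show ?thesis .
    qed
    ultimately have "\<sigma> * (M * \<delta>)\<^sup>2 < (- h / 2) * \<delta>" using \<delta>(1) by (metis mult_strict_right_mono)
    then show False using key by simp
  qed
  show ?thesis
  proof (intro conjI impI)
    assume A: "hamiltonian F (x \<tau>) \<xi> \<noteq> 0 \<and> p \<tau> = \<xi> /\<^sub>R hamiltonian F (x \<tau>) \<xi>"
    then have hpos: "h > 0" using hnn unfolding h_def by simp
    have "g \<tau> = H (x \<tau>) (inverse h *\<^sub>R \<xi>)" unfolding g_def using A unfolding h_def by simp
    also have "\<dots> = inverse h * h" unfolding h_def by (rule H_hom) (use hpos h_def in simp)
    also have "\<dots> = 1" using hpos by simp
    finally show "\<forall>t\<in>{0..\<tau>}. hamiltonian F (x t) (p t) = 1" using gconst unfolding g_def by simp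
  next
    assume A: "hamiltonian F (x \<tau>) \<xi> = 0 \<and> p \<tau> = \<xi>"
    then have "g \<tau> = 0" unfolding g_def by simp
    then show "\<forall>t\<in>{0..\<tau>}. hamiltonian F (x t) (p t) = 0" using gconst unfolding g_def by simp
  qed
qed

end
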